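(* Let $P(q)=\sum_{j=0}^{n} q^{j}a_{j}$ be a slice regular polynomial of degree $n$ with quaternionic coefficients, and let $P'(q)=\sum_{j=1}^n q^{j-1}ja_j$. Then $$\|P'\|_{2}\leq n\|P\|_{2},$$ where for a slice regular function $f$ on the unit ball $\mathbb B$, $$\|f\|_{2}:=\sup_{I\in\mathbb S}\lim_{r\to1^{-}}\Big(\int_{0}^{2\pi}|f_{I}(re^{I\theta})|^{2}\,d\theta\Big)^{1/2}.$$ Moreover, equality holds if and only if $P(q)=q^{n}a_{n}$ for some $a_{n}\in\mathbb H$.
   Context: $\mathbb H$ denotes the quaternions with modulus $|q|=\sqrt{q\bar q}$; $\mathbb B=\{q\in\mathbb H:|q|<1\}$; $\mathbb S=\{q\in\mathbb H: q^2=-1\}$ is the sphere of imaginary units; for $I\in\mathbb S$, $\mathbb C_I=\mathbb R\oplus I\mathbb R$ and $f_I$ denotes the restriction of $f$ to $\mathbb B\cap\mathbb C_I$. A slice regular polynomial of degree $n$ is a function $q\mapsto\sum_{j=0}^n q^ja_j$, $a_j\in\mathbb H$, $a_n\neq0$. *)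

theory Defs
  imports "HOL-Analysis.Analysis"
begin

datatype quat = Quat (qre: real) (qi: real) (qj: real) (qk: real)

instantiation quat :: ring_1
begin

definition "0 = Quat 0 0 0 0"
definition "1 = Quat 1 0 0 0"
definition "p + q = Quat (qre p + qre q) (qi p + qi q) (qj p + qj q) (qk p + qk q)"
definition "p - q = Quat (qre p - qre q) (qi p - qi q) (qj p - qj q) (qk p - qk q)"
definition "- q = Quat (- qre q) (- qi q) (- qj q) (- qk q)"
definition "p * q = Quat
   (qre p * qre q - qi p * qi q - qj p * qj q - qk p * qk q)
   (qre p * qi q + qi p * qre q + qj p * qk q - qk p * qj q)
   (qre p * qj q - qi p * qk q + qj p * qre q + qk p * qi q)
   (qre p * qk q + qi p * qj q - qj p * qi q + qk p * qre q)"

instance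
  by standard
     (simp_all add: zero_quat_def one_quat_def plus_quat_def minus_quat_def
        uminus_quat_def times_quat_def algebra_simps)

end

definition qreal :: "real \<Rightarrow> quat" where
  "qreal x = Quat x 0 0 0"

definition qabs :: "quat \<Rightarrow> real" where
  "qabs q = sqrt ((qre q)\<^sup>2 + (qi q)\<^sup>2 + (qj q)\<^sup>2 + (qk q)\<^sup>2)"

definition imag_units :: "quat set" where
  "imag_units = {q. q * q = - 1}"

text \<open>The point \<open>r e^{I\<theta>} = r cos \<theta> + I r sin \<theta>\<close> of the slice \<open>C_I\<close>.\<close>
definition slice_exp :: "quat \<Rightarrow> real \<Rightarrow> real \<Rightarrow> quat" where
  "slice_exp I r \<theta> = qreal (r * cos \<theta>) + qreal (r * sin \<theta>) * I"

definition H2norm :: "(quat \<Rightarrow> quat) \<Rightarrow> real" where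
  "H2norm f = (SUP I\<in>imag_units.
     Lim (at_left (1::real))
       (\<lambda>r. sqrt (integral {0..2*pi} (\<lambda>\<theta>. (qabs (f (slice_exp I r \<theta>)))\<^sup>2))))"

definition spoly :: "nat \<Rightarrow> (nat \<Rightarrow> quat) \<Rightarrow> quat \<Rightarrow> quat" where
  "spoly n a q = (\<Sum>j\<le>n. q ^ j * a j)"

definition spoly_deriv :: "nat \<Rightarrow> (nat \<Rightarrow> quat) \<Rightarrow> quat \<Rightarrow> quat" where
  "spoly_deriv n a q = (\<Sum>j\<in>{1..n}. q ^ (j - 1) * (of_nat j * a j))"

end

theory Submission
  imports Defs
begin

lemma quat_eq_iff: "p = q \<longleftrightarrow> qre p = qre q \<and> qi p = qi q \<and> qj p = qj q \<and> qk p = qk q"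
  by (cases p; cases q) auto

lemmas qdefs = zero_quat_def one_quat_def plus_quat_def minus_quat_def
        uminus_quat_def times_quat_def qreal_def

lemma qcomp_sum:
  "qre (sum f A) = (\<Sum>x\<in>A. qre (f x))" "qi (sum f A) = (\<Sum>x\<in>A. qi (f x))"
  "qj (sum f A) = (\<Sum>x\<in>A. qj (f x))" "qk (sum f A) = (\<Sum>x\<in>A. qk (f x))"
  by (induction A rule: infinite_finite_induct; simp add: qdefs)+

lemma of_nat_quat: "(of_nat m :: quat) = qreal (real m)"
  by (induction m) (simp_all add: qdefs)

lemma qreal_mult: "qreal x * qreal y = qreal (x*y)" by (simp add: qdefs)
lemma qreal_add: "qreal x + qreal y = qreal (x+y)" by (simp add: qdefs)
lemma qreal_comm: "qreal x * q = q * qreal x" by (simp add: qdefs)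
lemma qreal_pow: "qreal x ^ j = qreal (x^j)"
  by (induction j) (simp_all add: qdefs)

definition qdot :: "quat \<Rightarrow> quat \<Rightarrow> real" where
  "qdot p q = qre p * qre q + qi p * qi q + qj p * qj q + qk p * qk q"

lemma qabs_sq: "(qabs q)^2 = qdot q q"
  unfolding qabs_def qdot_def by (simp add: power2_eq_square add_nonneg_nonneg)

lemma qdot_sum_sum: "qdot (sum f A) (sum g B) = (\<Sum>j\<in>A. \<Sum>k\<in>B. qdot (f j) (g k))"
  by (simp add: qdot_def qcomp_sum sum_distrib_left sum_distrib_right sum.distrib sum.swap[of _ B])

lemma imag_unit_props:
  assumes "I \<in> imag_units"
  shows "qre I = 0" "(qi I)^2 + (qj I)^2 + (qk I)^2 = 1"
proof -
  from assms have e: "I * I = -1" by (simp add: imag_units_def)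
  have h: "qre I * qre I - qi I * qi I - qj I * qj I - qk I * qk I = -1"
     "qre I * qi I = 0" "qre I * qj I = 0" "qre I * qk I = 0"
    using arg_cong[OF e, of qre] arg_cong[OF e, of qi] arg_cong[OF e, of qj] arg_cong[OF e, of qk]
    by (simp_all add: qdefs algebra_simps)
  show "qre I = 0"
  proof (rule ccontr)
    assume "qre I \<noteq> 0"
    with h have "qi I = 0" "qj I = 0" "qk I = 0" by auto
    with h(1) have "qre I * qre I = -1" by simp
    thus False by (metis add.inverse_inverse neg_0_le_iff_le not_one_le_zero zero_le_square)
  qed
  with h(1) show "(qi I)^2 + (qj I)^2 + (qk I)^2 = 1" by (simp add: power2_eq_square)
qed

lemma qdot_key:
  assumes "qre I = 0" "(qi I)^2 + (qj I)^2 + (qk I)^2 = 1"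
  shows "qdot ((qreal \<alpha> + qreal \<beta> * I) * c) ((qreal \<gamma> + qreal \<delta> * I) * d)
     = (\<alpha>*\<gamma> + \<beta>*\<delta>) * qdot c d + (\<alpha>*\<delta> - \<beta>*\<gamma>) * qdot c (I*d)"
proof -
  obtain b1 b2 b3 where I: "I = Quat 0 b1 b2 b3" and n: "b1^2+b2^2+b3^2 = 1"
    using assms by (cases I) auto
  obtain c0 c1 c2 c3 where c: "c = Quat c0 c1 c2 c3" by (cases c)
  obtain d0 d1 d2 d3 where d: "d = Quat d0 d1 d2 d3" by (cases d)
  have "b3^2 = 1 - b1^2 - b2^2" using n by simp
  show ?thesis unfolding I c d qdot_def
    apply (simp add: qdefs algebra_simps power2_eq_square)
    apply (subgoal_tac "\<beta>*\<delta>*(b1*b1+b2*b2+b3*b3)*(c0*d0+c1*d1+c2*d2+c3*d3) = \<beta>*\<delta>*(c0*d0+c1*d1+c2*d2+c3*d3)")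
     apply (simp add: algebra_simps)
    using n by (simp add: power2_eq_square)
qed

lemma slice_mult:
  assumes "qre I = 0" "(qi I)^2 + (qj I)^2 + (qk I)^2 = 1"
  shows "(qreal a + qreal b * I) * (qreal c + qreal d * I) = qreal (a*c - b*d) + qreal (a*d + b*c) * I"
proof -
  obtain b1 b2 b3 where I: "I = Quat 0 b1 b2 b3" and n: "b1^2+b2^2+b3^2 = 1"
    using assms by (cases I) auto
  have n': "b1*b1 = 1 - b2*b2 - b3*b3" using n by (simp add: power2_eq_square)
  have "b*d*(b1^2+b2^2+b3^2) = b*d" using n by simp
  hence e: "b * (b1 * (b1 * d)) + (b * (b2 * (b2 * d)) + b * (b3 * (b3 * d))) = b*d"
    by (simp add: algebra_simps power2_eq_square)
  show ?thesis unfolding I quat_eq_iff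
    by (simp add: qdefs algebra_simps e)
qed

lemma slice_exp_pow:
  assumes "I \<in> imag_units"
  shows "slice_exp I r \<theta> ^ j = qreal (r^j * cos (real j * \<theta>)) + qreal (r^j * sin (real j * \<theta>)) * I"
proof (induction j)
  case 0
  then show ?case by (simp add: qdefs)
next
  case (Suc j)
  have "slice_exp I r \<theta> ^ Suc j = slice_exp I r \<theta> * slice_exp I r \<theta> ^ j" by simp
  also have "\<dots> = qreal (r * cos \<theta> * (r ^ j * cos (real j * \<theta>)) - r * sin \<theta> * (r ^ j * sin (real j * \<theta>))) +
    qreal (r * cos \<theta> * (r ^ j * sin (real j * \<theta>)) + r * sin \<theta> * (r ^ j * cos (real j * \<theta>))) * I"
    by (subst Suc.IH, unfold slice_exp_def, rule slice_mult[OF imag_unit_props[OF assms]])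
  also have "\<dots> = qreal (r^Suc j * cos (real (Suc j) * \<theta>)) + qreal (r^Suc j * sin (real (Suc j) * \<theta>)) * I"
    by (simp add: distrib_right cos_add sin_add algebra_simps)
  finally show ?case .
qed

lemma has_integral_cos_int:
  assumes "m \<in> \<int>"
  shows "((\<lambda>x. cos (m * x)) has_integral (if m = 0 then 2 * pi else 0)) {0..2*pi}"
proof (cases "m = 0")
  case True
  then show ?thesis
    using has_integral_const_real [of "1::real" 0 "2*pi"] by auto
next
  case False
  have "((\<lambda>x. cos (m * x)) has_integral (sin (m * (2*pi))/m - sin (m * 0)/m)) {0..2*pi}"
  proof (rule fundamental_theorem_of_calculus)
    show "((\<lambda>x. sin (m * x) / m) has_vector_derivative cos (m * x)) (at x within {0..2*pi})"
      for x :: real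
      using False
      unfolding has_vector_derivative_def
      by (intro derivative_eq_intros | force)+
  qed auto
  moreover have "sin (m * (2*pi)) = 0" using sin_integer_2pi[OF assms] by (simp add: mult.commute mult.left_commute)
  ultimately show ?thesis using False by simp
qed

lemma has_integral_sin_int:
  assumes "m \<in> \<int>"
  shows "((\<lambda>x. sin (m * x)) has_integral 0) {0..2*pi}"
proof (cases "m = 0")
  case True
  then show ?thesis by simp
next
  case False
  have "((\<lambda>x. sin (m * x)) has_integral (- cos (m * (2*pi))/m - - cos (m * 0)/m)) {0..2*pi}"
  proof (rule fundamental_theorem_of_calculus)
    show "((\<lambda>x. - cos (m * x) / m) has_vector_derivative sin (m * x)) (at x within {0..2*pi})"
      for x :: real
      using False
      unfolding has_vector_derivative_def
      by (intro derivative_eq_intros | force)+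
  qed auto
  moreover have "cos (m * (2*pi)) = 1" using cos_integer_2pi[OF assms] by (simp add: mult.commute mult.left_commute)
  ultimately show ?thesis using False by simp
qed

lemma term_integral:
  fixes j k :: nat
  shows "((\<lambda>\<theta>. r^(j+k) * (cos ((real k - real j) * \<theta>) * D + sin ((real k - real j) * \<theta>) * E))
     has_integral (if j = k then 2*pi*r^(j+k)*D else 0)) {0..2*pi}"
proof -
  have m: "real k - real j \<in> \<int>" by (metis Ints_diff Ints_of_nat)
  have "((\<lambda>\<theta>. r^(j+k) * D * cos ((real k - real j) * \<theta>) + r^(j+k) * E * sin ((real k - real j) * \<theta>))
     has_integral (r^(j+k) * D * (if real k - real j = 0 then 2*pi else 0) + r^(j+k) * E * 0)) {0..2*pi}"
    by (intro has_integral_add has_integral_mult_right has_integral_cos_int has_integral_sin_int m)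
  moreover have "(\<lambda>\<theta>. r^(j+k) * (cos ((real k - real j) * \<theta>) * D + sin ((real k - real j) * \<theta>) * E))
     = (\<lambda>\<theta>. r^(j+k) * D * cos ((real k - real j) * \<theta>) + r^(j+k) * E * sin ((real k - real j) * \<theta>))"
    by (simp add: algebra_simps)
  moreover have "(if j = k then 2*pi*r^(j+k)*D else 0) = r^(j+k) * D * (if real k - real j = 0 then 2*pi else 0) + r^(j+k) * E * 0"
    by auto
  ultimately show ?thesis by simp
qed

lemma term_qdot:
  assumes I: "I \<in> imag_units"
  shows "qdot (slice_exp I r \<theta> ^ j * c) (slice_exp I r \<theta> ^ k * d) =
     r^(j+k) * (cos ((real k - real j) * \<theta>) * qdot c d + sin ((real k - real j) * \<theta>) * qdot c (I * d))"
proof -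
  have a: "cos ((real k - real j) * \<theta>) = cos (real j * \<theta>) * cos (real k * \<theta>) + sin (real j * \<theta>) * sin (real k * \<theta>)"
    by (simp add: left_diff_distrib cos_diff)
  have b: "sin ((real k - real j) * \<theta>) = cos (real j * \<theta>) * sin (real k * \<theta>) - sin (real j * \<theta>) * cos (real k * \<theta>)"
    by (simp add: left_diff_distrib sin_diff)
  show ?thesis
    unfolding slice_exp_pow[OF I] qdot_key[OF imag_unit_props[OF I]] a b power_add
    by (simp only: distrib_left distrib_right left_diff_distrib right_diff_distrib mult.assoc mult.left_commute)
qed

lemma slice_integral:
  assumes I: "I \<in> imag_units"
  shows "((\<lambda>\<theta>. (qabs (spoly n c (slice_exp I r \<theta>)))^2) has_integral
          (2*pi * (\<Sum>j\<le>n. r^(2*j) * (qabs (c j))^2))) {0..2*pi}"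
proof -
  note P = imag_unit_props[OF I]
  have eq: "(qabs (spoly n c (slice_exp I r \<theta>)))^2 =
     (\<Sum>j\<le>n. \<Sum>k\<le>n. r^(j+k) * (cos ((real k - real j) * \<theta>) * qdot (c j) (c k)
        + sin ((real k - real j) * \<theta>) * qdot (c j) (I * c k)))" for \<theta>
    unfolding qabs_sq spoly_def qdot_sum_sum by (intro sum.cong refl term_qdot[OF I])
  have "((\<lambda>\<theta>. \<Sum>j\<le>n. \<Sum>k\<le>n. r^(j+k) * (cos ((real k - real j) * \<theta>) * qdot (c j) (c k)
        + sin ((real k - real j) * \<theta>) * qdot (c j) (I * c k))) has_integral
      (\<Sum>j\<le>n. \<Sum>k\<le>n. (if j = k then 2*pi*r^(j+k)*qdot (c j) (c k) else 0))) {0..2*pi}"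
    by (intro has_integral_sum finite_atMost term_integral)
  moreover have "(\<Sum>j\<le>n. \<Sum>k\<le>n. (if j = k then 2*pi*r^(j+k)*qdot (c j) (c k) else 0))
     = 2*pi * (\<Sum>j\<le>n. r^(2*j) * (qabs (c j))^2)"
    apply (simp only: sum.delta'[OF finite_atMost] sum_distrib_left qabs_sq mult_2 atMost_iff order_refl if_True)
    apply (rule sum.cong[OF refl])
    by (simp add: mult.assoc)
  ultimately show ?thesis unfolding eq by simp
qed

lemma imag_units_ne: "imag_units \<noteq> {}"
proof -
  have "Quat 0 1 0 0 \<in> imag_units" by (simp add: imag_units_def qdefs)
  thus ?thesis by blast
qed

lemma H2norm_spoly: "H2norm (spoly n c) = sqrt (2*pi*(\<Sum>j\<le>n. (qabs (c j))^2))"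
proof -
  have L: "Lim (at_left (1::real))
       (\<lambda>r. sqrt (integral {0..2*pi} (\<lambda>\<theta>. (qabs (spoly n c (slice_exp I r \<theta>)))\<^sup>2)))
       = sqrt (2*pi*(\<Sum>j\<le>n. (qabs (c j))^2))" if I: "I \<in> imag_units" for I
  proof -
    have f: "(\<lambda>r. sqrt (integral {0..2*pi} (\<lambda>\<theta>. (qabs (spoly n c (slice_exp I r \<theta>)))\<^sup>2)))
       = (\<lambda>r. sqrt (2*pi * (\<Sum>j\<le>n. r^(2*j) * (qabs (c j))^2)))"
      using integral_unique[OF slice_integral[OF I]] by presburger
    have "((\<lambda>r. sqrt (2*pi * (\<Sum>j\<le>n. r^(2*j) * (qabs (c j))^2))) \<longlongrightarrow>
           sqrt (2*pi * (\<Sum>j\<le>n. 1^(2*j) * (qabs (c j))^2))) (at_left 1)"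
      by (intro tendsto_intros)
    then show ?thesis unfolding f
      by (intro tendsto_Lim) (simp_all add: trivial_limit_at_left_real)
  qed
  show ?thesis unfolding H2norm_def
    using L imag_units_ne by (simp add: SUP_const cong: SUP_cong)
qed

lemma coeff_zero_qre:
  assumes "\<forall>x. spoly n a (qreal x) = qreal x ^ n * b" "j < n"
  shows "qre (a j) = 0"
proof -
  have "\<forall>x. (\<Sum>i\<le>n. (qre (a i) - (if i = n then qre b else 0)) * x^i) = 0"
  proof
    fix x :: real
    have "qre (spoly n a (qreal x)) = qre (qreal x ^ n * b)" using assms(1) by simp
    hence "(\<Sum>i\<le>n. qre (a i) * x^i) = x^n * qre b"
      unfolding spoly_def qreal_pow by (simp add: qcomp_sum qdefs mult.commute)
    moreover have "(\<Sum>i\<le>n. (if i = n then qre b else 0) * x^i) = x^n * qre b"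
      by (simp add: if_distrib[of "\<lambda>u. u * _"] cong: if_cong)
    ultimately show "(\<Sum>i\<le>n. (qre (a i) - (if i = n then qre b else 0)) * x^i) = 0"
      by (simp add: left_diff_distrib sum_subtractf)
  qed
  hence "\<forall>k\<le>n. qre (a k) - (if k = n then qre b else 0) = 0"
    using polyfun_eq_0[where n=n and c="\<lambda>i. qre (a i) - (if i = n then qre b else 0)"] by blast
  hence "qre (a j) - (if j = n then qre b else 0) = 0" using assms(2) by simp
  thus ?thesis using assms(2) by simp
qed

lemma coeff_zero_qi:
  assumes "\<forall>x. spoly n a (qreal x) = qreal x ^ n * b" "j < n"
  shows "qi (a j) = 0"
proof -
  have "\<forall>x. (\<Sum>i\<le>n. (qi (a i) - (if i = n then qi b else 0)) * x^i) = 0"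
  proof
    fix x :: real
    have "qi (spoly n a (qreal x)) = qi (qreal x ^ n * b)" using assms(1) by simp
    hence "(\<Sum>i\<le>n. qi (a i) * x^i) = x^n * qi b"
      unfolding spoly_def qreal_pow by (simp add: qcomp_sum qdefs mult.commute)
    moreover have "(\<Sum>i\<le>n. (if i = n then qi b else 0) * x^i) = x^n * qi b"
      by (simp add: if_distrib[of "\<lambda>u. u * _"] cong: if_cong)
    ultimately show "(\<Sum>i\<le>n. (qi (a i) - (if i = n then qi b else 0)) * x^i) = 0"
      by (simp add: left_diff_distrib sum_subtractf)
  qed
  hence "\<forall>k\<le>n. qi (a k) - (if k = n then qi b else 0) = 0"
    using polyfun_eq_0[where n=n and c="\<lambda>i. qi (a i) - (if i = n then qi b else 0)"] by blast
  hence "qi (a j) - (if j = n then qi b else 0) = 0" using assms(2) by simp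
  thus ?thesis using assms(2) by simp
qed

lemma coeff_zero_qj:
  assumes "\<forall>x. spoly n a (qreal x) = qreal x ^ n * b" "j < n"
  shows "qj (a j) = 0"
proof -
  have "\<forall>x. (\<Sum>i\<le>n. (qj (a i) - (if i = n then qj b else 0)) * x^i) = 0"
  proof
    fix x :: real
    have "qj (spoly n a (qreal x)) = qj (qreal x ^ n * b)" using assms(1) by simp
    hence "(\<Sum>i\<le>n. qj (a i) * x^i) = x^n * qj b"
      unfolding spoly_def qreal_pow by (simp add: qcomp_sum qdefs mult.commute)
    moreover have "(\<Sum>i\<le>n. (if i = n then qj b else 0) * x^i) = x^n * qj b"
      by (simp add: if_distrib[of "\<lambda>u. u * _"] cong: if_cong)
    ultimately show "(\<Sum>i\<le>n. (qj (a i) - (if i = n then qj b else 0)) * x^i) = 0"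
      by (simp add: left_diff_distrib sum_subtractf)
  qed
  hence "\<forall>k\<le>n. qj (a k) - (if k = n then qj b else 0) = 0"
    using polyfun_eq_0[where n=n and c="\<lambda>i. qj (a i) - (if i = n then qj b else 0)"] by blast
  hence "qj (a j) - (if j = n then qj b else 0) = 0" using assms(2) by simp
  thus ?thesis using assms(2) by simp
qed

lemma coeff_zero_qk:
  assumes "\<forall>x. spoly n a (qreal x) = qreal x ^ n * b" "j < n"
  shows "qk (a j) = 0"
proof -
  have "\<forall>x. (\<Sum>i\<le>n. (qk (a i) - (if i = n then qk b else 0)) * x^i) = 0"
  proof
    fix x :: real
    have "qk (spoly n a (qreal x)) = qk (qreal x ^ n * b)" using assms(1) by simp
    hence "(\<Sum>i\<le>n. qk (a i) * x^i) = x^n * qk b"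
      unfolding spoly_def qreal_pow by (simp add: qcomp_sum qdefs mult.commute)
    moreover have "(\<Sum>i\<le>n. (if i = n then qk b else 0) * x^i) = x^n * qk b"
      by (simp add: if_distrib[of "\<lambda>u. u * _"] cong: if_cong)
    ultimately show "(\<Sum>i\<le>n. (qk (a i) - (if i = n then qk b else 0)) * x^i) = 0"
      by (simp add: left_diff_distrib sum_subtractf)
  qed
  hence "\<forall>k\<le>n. qk (a k) - (if k = n then qk b else 0) = 0"
    using polyfun_eq_0[where n=n and c="\<lambda>i. qk (a i) - (if i = n then qk b else 0)"] by blast
  hence "qk (a j) - (if j = n then qk b else 0) = 0" using assms(2) by simp
  thus ?thesis using assms(2) by simp
qed

lemma coeff_zero:
  assumes "\<forall>x. spoly n a (qreal x) = qreal x ^ n * b" "j < n"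
  shows "a j = 0"
  using coeff_zero_qre[OF assms] coeff_zero_qi[OF assms] coeff_zero_qj[OF assms] coeff_zero_qk[OF assms]
  by (simp add: quat_eq_iff qdefs)

lemma monomial_iff: "(\<exists>b. \<forall>q. spoly n a q = q ^ n * b) \<longleftrightarrow> (\<forall>j<n. a j = 0)"
proof
  assume "\<exists>b. \<forall>q. spoly n a q = q ^ n * b"
  then obtain b where "\<forall>q. spoly n a q = q ^ n * b" by blast
  thus "\<forall>j<n. a j = 0" using coeff_zero by blast
next
  assume h: "\<forall>j<n. a j = 0"
  have "spoly n a q = q ^ n * a n" for q
  proof -
    have "spoly n a q = (\<Sum>j<Suc n. q^j * a j)" unfolding spoly_def lessThan_Suc_atMost ..
    also have "\<dots> = (\<Sum>j<n. q^j * a j) + q^n * a n" by simp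
    also have "(\<Sum>j<n. q^j * a j) = 0" using h by simp
    finally show ?thesis by simp
  qed
  thus "\<exists>b. \<forall>q. spoly n a q = q ^ n * b" by blast
qed

definition dco :: "nat \<Rightarrow> (nat \<Rightarrow> quat) \<Rightarrow> nat \<Rightarrow> quat" where
  "dco n a i = (if i < n then of_nat (Suc i) * a (Suc i) else 0)"

lemma spoly_deriv_eq: "spoly_deriv n a = spoly n (dco n a)"
proof
  fix q
  have "spoly_deriv n a q = (\<Sum>i<n. q^i * (of_nat (Suc i) * a (Suc i)))"
    unfolding spoly_deriv_def by (simp add: sum.atLeast1_atMost_eq del: of_nat_Suc)
  also have "\<dots> = (\<Sum>i<n. q^i * dco n a i)" by (simp add: dco_def del: of_nat_Suc)
  also have "\<dots> = (\<Sum>i<Suc n. q^i * dco n a i)" by (simp add: dco_def)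
  also have "\<dots> = spoly n (dco n a) q" unfolding spoly_def lessThan_Suc_atMost ..
  finally show "spoly_deriv n a q = spoly n (dco n a) q" .
qed

lemma qabs_scale: "(qabs (qreal x * q))^2 = x^2 * (qabs q)^2"
  unfolding qabs_sq qdot_def by (simp add: qdefs power2_eq_square algebra_simps)

lemma qabs_zero: "qabs q = 0 \<longleftrightarrow> q = 0"
  unfolding qabs_def by (cases q) (simp add: qdefs add_nonneg_eq_0_iff)

lemma sum_dco: "(\<Sum>i\<le>n. (qabs (dco n a i))^2) = (\<Sum>j\<le>n. (real j)^2 * (qabs (a j))^2)"
proof -
  have "(\<Sum>i\<le>n. (qabs (dco n a i))^2) = (\<Sum>i<Suc n. (qabs (dco n a i))^2)"
    unfolding lessThan_Suc_atMost ..
  also have "\<dots> = (\<Sum>i<n. (real (Suc i))^2 * (qabs (a (Suc i)))^2)"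
    using qabs_zero[of 0] by (simp add: dco_def of_nat_quat qabs_scale del: of_nat_Suc)
  also have "\<dots> = (\<Sum>j<Suc n. (real j)^2 * (qabs (a j))^2)"
    by (simp only: sum.lessThan_Suc_shift) simp
  finally show ?thesis unfolding lessThan_Suc_atMost .
qed

theorem theorem1p4:
  fixes n :: nat and a :: "nat \<Rightarrow> quat"
  assumes "a n \<noteq> 0"
  shows "H2norm (spoly_deriv n a) \<le> real n * H2norm (spoly n a) \<and>
         (H2norm (spoly_deriv n a) = real n * H2norm (spoly n a) \<longleftrightarrow>
           (\<exists>b. \<forall>q. spoly n a q = q ^ n * b))"
proof -
  define x where "x j = (qabs (a j))^2" for j
  define S where "S = (\<Sum>j\<le>n. x j)"
  define S' where "S' = (\<Sum>j\<le>n. (real j)^2 * x j)"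
  have x0: "x j \<ge> 0" for j unfolding x_def by simp
  have D: "H2norm (spoly_deriv n a) = sqrt (2*pi*S')"
    unfolding spoly_deriv_eq H2norm_spoly sum_dco S'_def x_def ..
  have P: "real n * H2norm (spoly n a) = sqrt ((real n)^2 * (2*pi*S))"
    unfolding H2norm_spoly S_def x_def by (simp add: real_sqrt_mult)
  have nS: "(real n)^2 * S = (\<Sum>j\<le>n. (real n)^2 * x j)" unfolding S_def by (simp add: sum_distrib_left)
  have diff: "(real n)^2 * S - S' = (\<Sum>j\<le>n. ((real n)^2 - (real j)^2) * x j)"
    unfolding nS S'_def by (simp add: sum_subtractf left_diff_distrib)
  have nn: "\<forall>j\<in>{..n}. 0 \<le> ((real n)^2 - (real j)^2) * x j"
    using x0 by (auto intro!: mult_nonneg_nonneg simp: power_mono)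
  have le: "S' \<le> (real n)^2 * S" using diff nn sum_nonneg[of "{..n}"] by (smt (verit))
  have ineq: "H2norm (spoly_deriv n a) \<le> real n * H2norm (spoly n a)"
    unfolding D P using le by (simp add: pi_gt_zero mult_left_mono)
  have "H2norm (spoly_deriv n a) = real n * H2norm (spoly n a) \<longleftrightarrow> S' = (real n)^2 * S"
    unfolding D P by (simp add: real_sqrt_eq_iff)
  also have "\<dots> \<longleftrightarrow> (\<forall>j\<in>{..n}. ((real n)^2 - (real j)^2) * x j = 0)"
    using sum_nonneg_eq_0_iff[OF finite_atMost nn[rule_format]] diff by auto
  also have "\<dots> \<longleftrightarrow> (\<forall>j<n. a j = 0)"
  proof -
    have H: "((real n)^2 - (real j)^2) * x j = 0 \<longleftrightarrow> a j = 0" if "j < n" for j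
    proof -
      have "(real j)^2 < (real n)^2" using that by (simp add: power_strict_mono)
      thus ?thesis unfolding x_def using qabs_zero[of "a j"] by auto
    qed
    have Hn: "((real n)^2 - (real n)^2) * x n = 0" by simp
    show ?thesis
    proof
      assume "\<forall>j\<in>{..n}. ((real n)^2 - (real j)^2) * x j = 0"
      thus "\<forall>j<n. a j = 0" using H by (meson atMost_iff less_imp_le)
    next
      assume A: "\<forall>j<n. a j = 0"
      show "\<forall>j\<in>{..n}. ((real n)^2 - (real j)^2) * x j = 0"
      proof
        fix j assume "j \<in> {..n}"
        hence "j < n \<or> j = n" by auto
        thus "((real n)^2 - (real j)^2) * x j = 0" using A H Hn by blast
      qed
    qed
  qed
  finally show ?thesis using ineq monomial_iff by blast
qed

end
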